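(* Let $n\ge2$, let $-1=x_1<\cdots<x_n=1$ be real numbers, and let $U_X=\{-1,1\}\times\{x_1,\ldots,x_n\}$. 1. For any labels $y_1,\ldots,y_n\in\mathbb{R}$, there exists $\mu\in\mathcal{M}(\mathbb{U},\mathbb{R})$ supported in $U_X$ with $f_\mu(x_i)=y_i$ for all $i\in[n]$ (i.e., feasible for the regression problem $\inf\int_{\mathbb{U}}|d\mu(u)|$ subject to $f_\mu(x_i)=y_i$ for all $i$). 2. For any $k\ge1$ and labels $y_1,\ldots,y_n\in[k]$, there exists $\nu\in\mathcal{M}(\mathbb{U},\mathbb{R}^k)$ supported in $U_X$ with $(e_{y_i}-e_l)^Tf_\nu(x_i)\ge\mathbb{1}(y_i\neq l)$ for all $i\in[n]$ and $l\in[k]$ (i.e., feasible for the classification problem $\inf\int_{\mathbb{U}}\|d\mu(u)\|$ subject to these constraints).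
   Context: $[n]=\{1,\ldots,n\}$; $e_j$ is the $j$-th canonical basis vector of $\mathbb{R}^k$; $\mathbb{1}(y_i\neq l)$ is $1$ if $y_i\neq l$ and $0$ otherwise. Let $\mathbb{U}=\{-1,1\}\times[-1,1]$. For $u=(s,c)\in\mathbb{U}$ and $x\in\mathbb{R}$ let $\phi_u(x)=(s(x-c))_+$, where $(t)_+=\max(t,0)$. $\mathcal{M}(\mathbb{U},\mathbb{R}^k)$ is the set of (finite) signed Radon measures on $\mathbb{U}$ with values in $\mathbb{R}^k$, and $f_\mu(x)=\int_{\mathbb{U}}\phi_u(x)\,d\mu(u)$. *)

theory Defs
  imports "HOL-Analysis.Analysis"
begin

definition UU :: "(real \<times> real) set" where
  "UU = {-1, 1} \<times> {-1..1}"

definition phi :: "real \<times> real \<Rightarrow> real \<Rightarrow> real" where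
  "phi u x = max (fst u * (x - snd u)) 0"

definition fin_meas_on_U :: "(real \<times> real) measure \<Rightarrow> bool" where
  "fin_meas_on_U M \<longleftrightarrow> sets M = sets borel \<and> finite_measure M \<and> emeasure M (UNIV - UU) = 0"

text \<open>A finite real-valued signed Radon measure on UU, given by its Jordan decomposition
  (positive part, negative part).\<close>
type_synonym smeasure = "(real \<times> real) measure \<times> (real \<times> real) measure"

definition signed_meas :: "smeasure \<Rightarrow> bool" where
  "signed_meas \<mu> \<longleftrightarrow> fin_meas_on_U (fst \<mu>) \<and> fin_meas_on_U (snd \<mu>)"

definition supported_in :: "smeasure \<Rightarrow> (real \<times> real) set \<Rightarrow> bool" where
  "supported_in \<mu> S \<longleftrightarrow> emeasure (fst \<mu>) (UNIV - S) = 0 \<and> emeasure (snd \<mu>) (UNIV - S) = 0"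

definition f_meas :: "smeasure \<Rightarrow> real \<Rightarrow> real" where
  "f_meas \<mu> x = (\<integral>u. phi u x \<partial>(fst \<mu>)) - (\<integral>u. phi u x \<partial>(snd \<mu>))"

end

theory Submission
  imports Defs
begin

definition pm :: "nat set \<Rightarrow> (nat \<Rightarrow> real) \<Rightarrow> (nat \<Rightarrow> real \<times> real) \<Rightarrow> (real \<times> real) measure" where
  "pm I w g = distr (point_measure I (\<lambda>i. ennreal (w i))) borel g"

lemma pm_sets: "sets (pm I w g) = sets borel" by (simp add: pm_def)

lemma pm_finite: assumes "finite I" shows "finite_measure (pm I w g)"
proof -
  have "finite_measure (point_measure I (\<lambda>i. ennreal (w i)))"
    by (rule finite_measureI) (simp add: space_point_measure emeasure_point_measure_finite assms)
  then show ?thesis unfolding pm_def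
    by (rule finite_measure.finite_measure_distr) simp
qed

lemma pm_null: assumes "finite I" "g ` I \<inter> A = {}" shows "emeasure (pm I w g) A = 0"
proof (cases "A \<in> sets borel")
  case True
  have "emeasure (pm I w g) A = emeasure (point_measure I (\<lambda>i. ennreal (w i))) (g -` A \<inter> I)"
    unfolding pm_def by (subst emeasure_distr) (auto simp: True space_point_measure)
  also have "g -` A \<inter> I = {}" using assms(2) by auto
  finally show ?thesis by simp
next
  case False
  then show ?thesis by (simp add: emeasure_notin_sets pm_sets)
qed

lemma pm_int: assumes "finite I" "\<And>i. i \<in> I \<Longrightarrow> w i \<ge> 0" "continuous_on UNIV h"
  shows "(\<integral>u. h u \<partial>(pm I w g)) = (\<Sum>i\<in>I. w i * h (g i))"
proof -
  have "(\<integral>u. h u \<partial>(pm I w g)) = (\<integral>i. h (g i) \<partial>(point_measure I (\<lambda>i. ennreal (w i))))"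
    unfolding pm_def by (rule integral_distr) (auto intro: borel_measurable_continuous_onI assms(3))
  also have "\<dots> = (\<Sum>i\<in>I. w i * h (g i))"
    by (subst lebesgue_integral_point_measure_finite) (use assms in auto)
  finally show ?thesis .
qed

lemma phi_cont: "continuous_on UNIV (\<lambda>u. phi u t)"
  unfolding phi_def by (intro continuous_intros)

lemma exists_meas:
  fixes I :: "nat set"
  assumes "finite I" "g ` I \<subseteq> S" "S \<subseteq> UU"
  shows "\<exists>\<mu>. signed_meas \<mu> \<and> supported_in \<mu> S \<and> (\<forall>t. f_meas \<mu> t = (\<Sum>i\<in>I. c i * phi (g i) t))"
proof (intro exI conjI allI)
  let ?\<mu> = "(pm I (\<lambda>i. max (c i) 0) g, pm I (\<lambda>i. max (- c i) 0) g)"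
  have d1: "g ` I \<inter> (UNIV - UU) = {}" "g ` I \<inter> (UNIV - S) = {}" using assms by auto
  show "signed_meas ?\<mu>"
    unfolding signed_meas_def fin_meas_on_U_def
    using pm_null[OF assms(1) d1(1)] pm_finite[OF assms(1)] by (simp add: pm_sets)
  show "supported_in ?\<mu> S"
    unfolding supported_in_def using pm_null[OF assms(1) d1(2)] by simp
  fix t
  have "f_meas ?\<mu> t = (\<Sum>i\<in>I. max (c i) 0 * phi (g i) t) - (\<Sum>i\<in>I. max (- c i) 0 * phi (g i) t)"
    unfolding f_meas_def using assms(1) by (simp add: pm_int phi_cont)
  also have "\<dots> = (\<Sum>i\<in>I. c i * phi (g i) t)"
    by (subst sum_subtractf[symmetric]) (rule sum.cong, auto simp: max_def algebra_simps)
  finally show "f_meas ?\<mu> t = (\<Sum>i\<in>I. c i * phi (g i) t)" .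
qed

lemma mono_x:
  assumes "\<forall>i\<in>{1..<n}. x i < x (Suc i)" "1 \<le> i" "i \<le> j" "j \<le> n"
  shows "(x i :: real) \<le> x j"
  using assms(3,4)
proof (induction j)
  case 0 then show ?case using assms(2) by simp
next
  case (Suc j)
  show ?case
  proof (cases "i = Suc j")
    case False
    then have "x i \<le> x j" using Suc by simp
    also have "x j < x (Suc j)" using assms(1) Suc.prems False assms(2) by auto
    finally show ?thesis by simp
  qed simp
qed

lemma interp:
  assumes "\<forall>i\<in>{1..<n}. x i < x (Suc i)" "1 \<le> m" "m \<le> n"
  shows "\<exists>a c. \<forall>i\<in>{1..m}. a + (\<Sum>j\<in>{1..<m}. c j * max (x i - x j) 0) = (y i :: real)"
  using assms(2,3)
proof (induction m rule: dec_induct)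
  case base
  show ?case by (rule exI[of _ "y 1"]) simp
next
  case (step m)
  then obtain a c where ac: "\<forall>i\<in>{1..m}. a + (\<Sum>j\<in>{1..<m}. c j * max (x i - x j) 0) = y i" by auto
  define v where "v = a + (\<Sum>j\<in>{1..<m}. c j * max (x (Suc m) - x j) 0)"
  define c' where "c' = c(m := (y (Suc m) - v) / (x (Suc m) - x m))"
  have gap: "x m < x (Suc m)" using assms(1) step by auto
  have S: "(\<Sum>j\<in>{1..<Suc m}. c' j * max (x i - x j) 0) =
      (\<Sum>j\<in>{1..<m}. c j * max (x i - x j) 0) + c' m * max (x i - x m) 0" for i
    using step(1) by (simp add: c'_def)
  show ?case
  proof (intro exI ballI)
    fix i assume i: "i \<in> {1..Suc m}"
    show "a + (\<Sum>j\<in>{1..<Suc m}. c' j * max (x i - x j) 0) = y i"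
    proof (cases "i = Suc m")
      case True
      then show ?thesis using gap unfolding S by (simp add: c'_def v_def field_simps)
    next
      case False
      then have "i \<in> {1..m}" using i by auto
      moreover then have "x i \<le> x m" using mono_x[OF assms(1)] step by auto
      ultimately show ?thesis unfolding S using ac by simp
    qed
  qed
qed

theorem lemma3:
  fixes n :: nat and x :: "nat \<Rightarrow> real"
  assumes "n \<ge> 2"
    and "x 1 = -1" and "x n = 1"
    and "\<forall>i\<in>{1..<n}. x i < x (Suc i)"
  shows "(\<forall>y :: nat \<Rightarrow> real. \<exists>\<mu>. signed_meas \<mu> \<and> supported_in \<mu> ({-1, 1} \<times> x ` {1..n})
            \<and> (\<forall>i\<in>{1..n}. f_meas \<mu> (x i) = y i))
    \<and> (\<forall>(k::nat) (y :: nat \<Rightarrow> nat). k \<ge> 1 \<longrightarrow> (\<forall>i\<in>{1..n}. y i \<in> {1..k}) \<longrightarrow>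
         (\<exists>\<nu> :: nat \<Rightarrow> smeasure.
            (\<forall>j\<in>{1..k}. signed_meas (\<nu> j) \<and> supported_in (\<nu> j) ({-1, 1} \<times> x ` {1..n}))
          \<and> (\<forall>i\<in>{1..n}. \<forall>l\<in>{1..k}.
               f_meas (\<nu> (y i)) (x i) - f_meas (\<nu> l) (x i) \<ge> (if y i \<noteq> l then 1 else 0))))"
proof -
  let ?S = "{-1, 1} \<times> x ` {1..n}"
  have xr: "x i \<in> {-1..1}" if "i \<in> {1..n}" for i
    using mono_x[OF assms(4), of 1 i] mono_x[OF assms(4), of i n] that assms(2,3) by auto
  have SU: "?S \<subseteq> UU" unfolding UU_def using xr by auto
  have P1: "\<exists>\<mu>. signed_meas \<mu> \<and> supported_in \<mu> ?S \<and> (\<forall>i\<in>{1..n}. f_meas \<mu> (x i) = y i)" for y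
  proof -
    obtain a c where ac: "\<forall>i\<in>{1..n}. a + (\<Sum>j\<in>{1..<n}. c j * max (x i - x j) 0) = y i"
      using interp[OF assms(4), of n y] assms(1) by auto
    define g where "g j = (if j = 0 then (-1, x n) else if j = n then (1, x 1) else (1::real, x j))" for j
    define w where "w j = (if j = 0 \<or> j = n then a / 2 else c j)" for j
    have gS: "g ` {0..n} \<subseteq> ?S" unfolding g_def using assms(1) by auto
    obtain \<mu> where mu: "signed_meas \<mu>" "supported_in \<mu> ?S"
      "\<forall>t. f_meas \<mu> t = (\<Sum>j\<in>{0..n}. w j * phi (g j) t)"
      using exists_meas[OF _ gS SU, of w] by auto
    have "f_meas \<mu> (x i) = y i" if i: "i \<in> {1..n}" for i
    proof -
      have split: "{0..n} = insert 0 (insert n {1..<n})" using assms(1) by auto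
      have "(\<Sum>j\<in>{0..n}. w j * phi (g j) (x i)) =
          w 0 * phi (g 0) (x i) + w n * phi (g n) (x i) + (\<Sum>j\<in>{1..<n}. w j * phi (g j) (x i))"
        unfolding split using assms(1) by simp
      also have "(\<Sum>j\<in>{1..<n}. w j * phi (g j) (x i)) = (\<Sum>j\<in>{1..<n}. c j * max (x i - x j) 0)"
        by (rule sum.cong) (auto simp: w_def g_def phi_def)
      also have "w 0 * phi (g 0) (x i) + w n * phi (g n) (x i) = a"
      proof -
        have "phi (g 0) (x i) = 1 - x i" "phi (g n) (x i) = x i + 1"
          using xr[OF i] assms(1,2,3) by (auto simp: g_def phi_def max_def)
        moreover have "w 0 = a / 2" "w n = a / 2" by (auto simp: w_def)
        ultimately show ?thesis by (simp only:) (simp add: field_simps)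
      qed
      finally show ?thesis using mu(3) ac i by simp
    qed
    then show ?thesis using mu by blast
  qed
  show ?thesis
  proof (intro conjI allI impI)
    fix y :: "nat \<Rightarrow> real" show "\<exists>\<mu>. signed_meas \<mu> \<and> supported_in \<mu> ?S \<and> (\<forall>i\<in>{1..n}. f_meas \<mu> (x i) = y i)"
      by (rule P1)
  next
    fix k :: nat and y :: "nat \<Rightarrow> nat"
    assume "1 \<le> k" "\<forall>i\<in>{1..n}. y i \<in> {1..k}"
    have "\<forall>j. \<exists>\<mu>. signed_meas \<mu> \<and> supported_in \<mu> ?S \<and> (\<forall>i\<in>{1..n}. f_meas \<mu> (x i) = (if y i = j then 1 else 0))"
      using P1[of "\<lambda>i. if y i = j then 1 else 0" for j] by blast
    then obtain \<nu> where nu: "\<And>j. signed_meas (\<nu> j) \<and> supported_in (\<nu> j) ?S \<and> (\<forall>i\<in>{1..n}. f_meas (\<nu> j) (x i) = (if y i = j then 1 else 0))"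
      by metis
    show "\<exists>\<nu> :: nat \<Rightarrow> smeasure.
            (\<forall>j\<in>{1..k}. signed_meas (\<nu> j) \<and> supported_in (\<nu> j) ?S)
          \<and> (\<forall>i\<in>{1..n}. \<forall>l\<in>{1..k}.
               f_meas (\<nu> (y i)) (x i) - f_meas (\<nu> l) (x i) \<ge> (if y i \<noteq> l then 1 else 0))"
    proof (intro exI[of _ \<nu>] conjI ballI)
      fix j show "signed_meas (\<nu> j)" "supported_in (\<nu> j) ?S" using nu by blast+
    next
      fix i l assume "i \<in> {1..n}" "l \<in> {1..k}"
      then show "f_meas (\<nu> (y i)) (x i) - f_meas (\<nu> l) (x i) \<ge> (if y i \<noteq> l then 1 else 0)"
        using nu by simp
    qed
  qed
qed

end
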